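(* Let $T=\bigoplus_p\mathbb Z(p)$ (sum over all primes) and $G=\prod_p\mathbb Z(p)$, so $T$ is the torsion subgroup of $G$. Then $G$ and $T$ are strongly co-Hopfian, but $G/T$ is not strongly co-Hopfian.
   Context: All groups are abelian. A group $G$ is strongly co-Hopfian if for every endomorphism $f$ of $G$ there is $n\in\mathbb N$ with $f^n(G)=f^{n+1}(G)$. $\mathbb Z(p)$ denotes the cyclic group of order $p$. *)

theory Defs
  imports "HOL-Algebra.Product_Groups" "HOL-Algebra.Elementary_Groups" "HOL-Computational_Algebra.Primes"
begin

definition strongly_coHopfian :: "('a, 'b) monoid_scheme \<Rightarrow> bool" where
  "strongly_coHopfian G \<longleftrightarrow>
     (\<forall>f \<in> hom G G. \<exists>n::nat. (f ^^ n) ` carrier G = (f ^^ Suc n) ` carrier G)"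

definition primeProd :: "(nat \<Rightarrow> int) monoid" where
  "primeProd = product_group {p. prime p} integer_mod_group"

definition primeSum :: "(nat \<Rightarrow> int) monoid" where
  "primeSum = sum_group {p. prime p} integer_mod_group"

end

theory Submission
  imports Defs "HOL-Number_Theory.Number_Theory" "HOL-Library.Nat_Bijection" "HOL-Library.Infinite_Set"
begin

abbreviation "PP \<equiv> {p::nat. prime p}"

lemma fermat_int:
  fixes a :: int and p :: nat
  assumes "prime p" "\<not> int p dvd a"
  shows "[a ^ (p - 1) = 1] (mod int p)"
proof -
  define b where "b = nat (a mod int p)"
  have p0: "int p > 0" using assms(1) prime_gt_0_nat by simp
  have ab: "int b = a mod int p" using p0 b_def by simp
  have "\<not> p dvd b"
  proof
    assume "p dvd b" then have "int p dvd int b" by simp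
    then show False using assms(2) ab by (simp add: dvd_mod_iff)
  qed
  then have "[b ^ (p - 1) = 1] (mod p)" using fermat_theorem assms(1) by blast
  then have "[int b ^ (p - 1) = 1] (mod int p)"
    by (metis cong_int_iff of_nat_1 of_nat_power)
  moreover have "[int b = a] (mod int p)" using ab by (simp add: cong_def)
  ultimately show ?thesis by (meson cong_pow cong_sym cong_trans)
qed

lemma fermat_int2:
  fixes a :: int and p :: nat
  assumes "prime p"
  shows "[a ^ p = a] (mod int p)"
proof (cases "int p dvd a")
  case True
  have "a ^ p = a * a ^ (p - 1)" using prime_gt_0_nat[OF assms] by (metis Suc_diff_1 power_Suc)
  then have "int p dvd a ^ p" using True by (metis dvd_mult2)
  then show ?thesis using True by (simp add: cong_def dvd_eq_mod_eq_0)
next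
  case False
  have "[a ^ (p - 1) * a = 1 * a] (mod int p)" using fermat_int[OF assms False] cong_mult cong_refl by blast
  moreover have "a ^ (p-1) * a = a ^ p" using assms prime_gt_0_nat
    by (metis Suc_diff_1 power_Suc2)
  ultimately show ?thesis by simp
qed

lemma pow_K:
  assumes grp: "group K"
    and multK: "monoid.mult K = (\<lambda>x y. \<lambda>i\<in>PP. (x i + y i) mod int i)"
    and oneK: "one K = (\<lambda>i\<in>PP. 0)"
  shows "x [^]\<^bsub>K\<^esub> (n::nat) = (\<lambda>i\<in>PP. (int n * x i) mod int i)"
proof (induction n)
  case 0
  then show ?case using oneK by simp
next
  case (Suc n)
  have "x [^]\<^bsub>K\<^esub> Suc n = x [^]\<^bsub>K\<^esub> n \<otimes>\<^bsub>K\<^esub> x"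
    using grp by (simp add: monoid.nat_pow_Suc group.is_monoid)
  also have "\<dots> = (\<lambda>i\<in>PP. (int (Suc n) * x i) mod int i)"
    unfolding Suc multK by (auto simp: fun_eq_iff mod_add_right_eq mod_add_left_eq algebra_simps)
  finally show ?case .
qed

lemma coHopf_generic:
  assumes grp: "group K"
    and multK: "monoid.mult K = (\<lambda>x y. \<lambda>i\<in>PP. (x i + y i) mod int i)"
    and oneK: "one K = (\<lambda>i\<in>PP. 0)"
    and carK: "carrier K \<subseteq> PiE PP (\<lambda>i. {0..<int i})"
    and delta: "\<And>p. prime p \<Longrightarrow> (\<lambda>q\<in>PP. if q = p then 1 else 0) \<in> carrier K"
    and clos: "\<And>x x'. x \<in> carrier K \<Longrightarrow> x' \<in> PiE PP (\<lambda>i. {0..<int i}) \<Longrightarrow>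
                 (\<And>q. prime q \<Longrightarrow> x q = 0 \<Longrightarrow> x' q = 0) \<Longrightarrow> x' \<in> carrier K"
  shows "strongly_coHopfian K"
  unfolding strongly_coHopfian_def
proof
  fix f assume f: "f \<in> hom K K"
  have fK: "\<And>x. x \<in> carrier K \<Longrightarrow> f x \<in> carrier K" using f by (auto simp: hom_def)
  have fm: "\<And>x y. x \<in> carrier K \<Longrightarrow> y \<in> carrier K \<Longrightarrow> f (x \<otimes>\<^bsub>K\<^esub> y) = f x \<otimes>\<^bsub>K\<^esub> f y"
    by (simp add: hom_mult[OF f])
  have fp: "\<And>x n. x \<in> carrier K \<Longrightarrow> f (x [^]\<^bsub>K\<^esub> (n::nat)) = f x [^]\<^bsub>K\<^esub> n"
    by (rule hom_nat_pow[OF f _ grp grp])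
  have pw: "\<And>x n. x [^]\<^bsub>K\<^esub> (n::nat) = (\<lambda>i\<in>PP. (int n * x i) mod int i)"
    using pow_K[OF grp multK oneK] .
  have comp: "0 \<le> x p \<and> x p < int p" if "x \<in> carrier K" "prime p" for x p
  proof -
    have "x \<in> PiE PP (\<lambda>i. {0..<int i})" using carK that(1) by blast
    then show ?thesis using that(2) unfolding PiE_iff by auto
  qed
  have ext: "x \<in> extensional PP" if "x \<in> carrier K" for x
  proof -
    have "x \<in> PiE PP (\<lambda>i. {0..<int i})" using carK that(1) by blast
    then show ?thesis unfolding PiE_iff by auto
  qed
  have eqK: "x = y" if "x \<in> carrier K" "y \<in> carrier K" "\<And>p. prime p \<Longrightarrow> x p = y p" for x y
    using ext[OF that(1)] ext[OF that(2)] that(3) by (intro extensionalityI) auto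
  have ppos: "\<And>p::nat. prime p \<Longrightarrow> int p > 0" using prime_gt_0_nat by simp
  have div: "\<exists>z\<in>carrier K. x = z [^]\<^bsub>K\<^esub> p" if x: "x \<in> carrier K" and p: "prime p" and x0: "x p = 0" for x p
  proof -
    define z where "z = (\<lambda>q\<in>PP. if q = p then 0 else (x q * int p ^ (q - 2)) mod int q)"
    have zP: "z \<in> PiE PP (\<lambda>i. {0..<int i})" using ppos by (auto simp: z_def)
    have zK: "z \<in> carrier K"
      by (rule clos[OF x zP]) (auto simp: z_def)
    have "x = z [^]\<^bsub>K\<^esub> p"
    proof (rule eqK[OF x])
      show "z [^]\<^bsub>K\<^esub> p \<in> carrier K" using zK grp by (simp add: group.is_monoid monoid.nat_pow_closed)
      fix q :: nat assume q: "prime q"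
      show "x q = (z [^]\<^bsub>K\<^esub> p) q"
      proof (cases "q = p")
        case True then show ?thesis using x0 q by (simp add: pw z_def)
      next
        case False
        have "\<not> q dvd p" using False p q primes_dvd_imp_eq by blast
        then have nd: "\<not> int q dvd int p" by simp
        have q2: "q - 2 + 1 = q - 1" using prime_ge_2_nat[OF q] by arith
        have e: "int p ^ (q - 1) = int p ^ (q - 2) * int p" unfolding q2[symmetric] by simp
        have "[int p * (x q * int p ^ (q - 2)) = x q * int p ^ (q - 1)] (mod int q)"
          unfolding e by (simp add: cong_def algebra_simps)
        also have "[x q * int p ^ (q - 1) = x q * 1] (mod int q)"
          by (rule cong_mult[OF cong_refl fermat_int[OF q nd]])
        finally have "(int p * (x q * int p ^ (q - 2))) mod int q = x q mod int q"
          by (simp add: cong_def)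
        also have "\<dots> = x q" using comp[OF x q] by simp
        finally show ?thesis using False q by (simp add: pw z_def mod_mult_right_eq)
      qed
    qed
    then show ?thesis using zK by (rule bexI)
  qed
  have zero_at: "f x p = 0" if x: "x \<in> carrier K" and p: "prime p" and x0: "x p = 0" for x p
  proof -
    obtain z where z: "z \<in> carrier K" "x = z [^]\<^bsub>K\<^esub> p" using div[OF x p x0] by blast
    have "f x = f z [^]\<^bsub>K\<^esub> p" using z fp by simp
    then show ?thesis using p by (simp add: pw)
  qed
  define c where "c p = f (\<lambda>q\<in>PP. if q = p then 1 else 0) p" for p
  have key: "f x p = (x p * c p) mod int p" if x: "x \<in> carrier K" and p: "prime p" for x p
  proof -
    let ?d = "(\<lambda>q\<in>PP. if q = p then 1 else (0::int))"
    have dK: "?d \<in> carrier K" using delta p by simp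
    define u where "u = ?d [^]\<^bsub>K\<^esub> nat (x p)"
    have uK: "u \<in> carrier K" using dK grp by (simp add: u_def group.is_monoid monoid.nat_pow_closed)
    have up: "u p = x p" using comp[OF x p] p by (simp add: u_def pw)
    define w where "w = x \<otimes>\<^bsub>K\<^esub> u [^]\<^bsub>K\<^esub> (p - 1)"
    have upK: "u [^]\<^bsub>K\<^esub> (p - 1) \<in> carrier K" using uK grp by (simp add: group.is_monoid monoid.nat_pow_closed)
    have wK: "w \<in> carrier K" using x upK grp by (simp add: w_def group.is_monoid monoid.m_closed)
    have p1: "int (p - 1) = int p - 1" using prime_gt_0_nat[OF p] by (simp add: of_nat_diff)
    have p1': "int (p - Suc 0) = int p - 1" using p1 by simp
    have "w p = (x p + (int p - 1) * x p mod int p) mod int p"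
      using p by (simp add: w_def multK pw up p1')
    also have "\<dots> = (int p * x p) mod int p" by (simp add: mod_add_right_eq algebra_simps)
    finally have w0: "w p = 0" by simp
    have fw: "f w = f x \<otimes>\<^bsub>K\<^esub> f u [^]\<^bsub>K\<^esub> (p - 1)"
      using fm[OF x upK] fp[OF uK] by (simp add: w_def)
    have "0 = (f x p + (int p - 1) * f u p mod int p) mod int p"
      using zero_at[OF wK p w0] p by (simp add: fw multK pw p1')
    then have "[f x p + (int p - 1) * f u p = 0] (mod int p)"
      by (simp add: cong_def mod_add_right_eq)
    then have "[f x p + (int p - 1) * f u p + f u p = 0 + f u p] (mod int p)"
      using cong_add cong_refl by blast
    then have "[f x p + int p * f u p = f u p] (mod int p)" by (simp add: algebra_simps)
    then have "[f x p = f u p] (mod int p)"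
      by (simp add: cong_def)
    then have "f x p = f u p mod int p" using comp[OF fK[OF x] p] by (simp add: cong_def)
    also have "f u = f ?d [^]\<^bsub>K\<^esub> nat (x p)" using fp[OF dK] u_def by simp
    then have "f u p = (x p * c p) mod int p" using p comp[OF x p] by (simp add: pw c_def)
    finally show ?thesis by simp
  qed
  show "\<exists>n. (f ^^ n) ` carrier K = (f ^^ Suc n) ` carrier K"
  proof (rule exI[of _ 1])
    have "f ` carrier K \<subseteq> f ` f ` carrier K"
    proof
      fix y assume "y \<in> f ` carrier K"
      then obtain x where x: "x \<in> carrier K" "y = f x" by blast
      define x' where "x' = (\<lambda>q\<in>PP. if c q mod int q = 0 then 0 else (x q * c q ^ (q - 2)) mod int q)"
      have x'P: "x' \<in> PiE PP (\<lambda>i. {0..<int i})" using ppos by (auto simp: x'_def)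
      have x'K: "x' \<in> carrier K" by (rule clos[OF x(1) x'P]) (auto simp: x'_def)
      have "f x = f (f x')"
      proof (rule eqK[OF fK[OF x(1)] fK[OF fK[OF x'K]]])
        fix q :: nat assume q: "prime q"
        show "f x q = f (f x') q"
        proof (cases "c q mod int q = 0")
          case True
          have z: "a * c q mod int q = 0" for a
            using True by (metis mod_mult_right_eq mult_zero_right mod_0)
          then show ?thesis using key[OF x(1) q] key[OF fK[OF x'K] q] by simp
        next
          case False
          have q2: "q - 2 + 2 = q" using prime_ge_2_nat[OF q] by arith
          have "f (f x') q = ((x q * c q ^ (q - 2)) mod int q * c q mod int q * c q) mod int q"
            using key[OF x(1) q] key[OF fK[OF x'K] q] key[OF x'K q] False q
            by (simp add: x'_def)
          also have "\<dots> = (x q * (c q ^ (q - 2) * c q ^ 2)) mod int q"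
            by (simp only: mod_mult_left_eq) (simp add: power2_eq_square algebra_simps)
          also have "\<dots> = (x q * c q ^ q) mod int q"
            by (metis q2 power_add)
          also have "\<dots> = (x q * c q) mod int q"
            using fermat_int2[OF q, of "c q"] by (metis cong_def mod_mult_right_eq)
          finally show ?thesis using key[OF x(1) q] by simp
        qed
      qed
      then show "y \<in> f ` f ` carrier K" using x x'K by blast
    qed
    moreover have "f ` f ` carrier K \<subseteq> f ` carrier K" using fK by blast
    ultimately show "(f ^^ 1) ` carrier K = (f ^^ Suc 1) ` carrier K"
      by (simp add: image_comp)
  qed
qed


lemma carPP: "(\<Pi>\<^sub>E i\<in>PP. carrier (integer_mod_group i)) = (\<Pi>\<^sub>E i\<in>PP. {0..<int i})"
  by (rule PiE_cong) (auto simp: carrier_integer_mod_group dest: prime_gt_0_nat)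

lemma grpM: "\<And>i. i \<in> PP \<Longrightarrow> group (integer_mod_group i)" by simp

lemma carrier_primeProd: "carrier primeProd = (\<Pi>\<^sub>E i\<in>PP. {0..<int i})"
  by (simp add: primeProd_def carPP)

lemma carrier_primeSum: "carrier primeSum = {x \<in> (\<Pi>\<^sub>E i\<in>PP. {0..<int i}). finite {i \<in> PP. x i \<noteq> 0}}"
  by (simp add: primeSum_def carrier_sum_group carPP)

lemma group_primeProd: "group primeProd" by (simp add: primeProd_def)
lemma group_primeSum: "group primeSum" by (simp add: primeSum_def)

lemma mult_primeProd: "monoid.mult primeProd = (\<lambda>x y. \<lambda>i\<in>PP. (x i + y i) mod int i)"
  by (simp add: primeProd_def)
lemma mult_primeSum: "monoid.mult primeSum = (\<lambda>x y. \<lambda>i\<in>PP. (x i + y i) mod int i)"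
  by (simp add: primeSum_def)
lemma one_primeProd: "one primeProd = (\<lambda>i\<in>PP. 0)"
  by (simp add: primeProd_def)
lemma one_primeSum: "one primeSum = (\<lambda>i\<in>PP. 0)"
  by (simp add: primeSum_def)

lemma prime_Suc0: "prime (p::nat) \<Longrightarrow> Suc 0 < p"
  using prime_gt_1_nat by simp

lemma delta_in: "prime p \<Longrightarrow> (\<lambda>q\<in>PP. if q = p then 1 else (0::int)) \<in> (\<Pi>\<^sub>E i\<in>PP. {0..<int i})"
  by (auto simp: prime_Suc0 prime_gt_0_nat)

lemma coHopf_prod: "strongly_coHopfian primeProd"
  by (rule coHopf_generic[OF group_primeProd mult_primeProd one_primeProd])
     (auto simp: carrier_primeProd prime_Suc0 prime_gt_0_nat)

lemma coHopf_sum: "strongly_coHopfian primeSum"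
proof (rule coHopf_generic[OF group_primeSum mult_primeSum one_primeSum])
  show "carrier primeSum \<subseteq> (\<Pi>\<^sub>E i\<in>PP. {0..<int i})" by (auto simp: carrier_primeSum)
  fix p :: nat assume p: "prime p"
  have "{i \<in> PP. (\<lambda>q\<in>PP. if q = p then 1 else (0::int)) i \<noteq> 0} \<subseteq> {p}" by auto
  then show "(\<lambda>q\<in>PP. if q = p then 1 else (0::int)) \<in> carrier primeSum"
    using delta_in[OF p] by (auto simp: carrier_primeSum intro: finite_subset)
next
  fix x x' :: "nat \<Rightarrow> int"
  assume x: "x \<in> carrier primeSum" and x': "x' \<in> (\<Pi>\<^sub>E i\<in>PP. {0..<int i})"
    and z: "\<And>q. prime q \<Longrightarrow> x q = 0 \<Longrightarrow> x' q = 0"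
  have "{i \<in> PP. x' i \<noteq> 0} \<subseteq> {i \<in> PP. x i \<noteq> 0}" using z by auto
  then show "x' \<in> carrier primeSum" using x x' by (auto simp: carrier_primeSum intro: finite_subset)
qed


definition ev_eq :: "(nat \<Rightarrow> int) \<Rightarrow> (nat \<Rightarrow> int) \<Rightarrow> bool" where
  "ev_eq x y \<longleftrightarrow> finite {p. prime p \<and> \<not> [x p = y p] (mod int p)}"

lemma ev_eq_refl[simp]: "ev_eq x x" by (simp add: ev_eq_def)

lemma ev_eq_by:
  assumes "finite E" "\<And>p. prime p \<Longrightarrow> p \<notin> E \<Longrightarrow> [x p = y p] (mod int p)"
  shows "ev_eq x y"
proof -
  have "{p. prime p \<and> \<not> [x p = y p] (mod int p)} \<subseteq> E" using assms(2) by blast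
  then show ?thesis unfolding ev_eq_def using assms(1) finite_subset by blast
qed

lemma ev_eqD: "ev_eq x y \<Longrightarrow> finite {p. prime p \<and> \<not> [x p = y p] (mod int p)}"
  by (simp add: ev_eq_def)

lemma equivp_ev_eq: "equivp ev_eq"
proof (rule equivpI)
  show "reflp ev_eq" by (simp add: reflp_def)
  show "symp ev_eq" unfolding symp_def ev_eq_def by (simp add: cong_sym_eq)
  show "transp ev_eq" unfolding transp_def
  proof (intro allI impI)
    fix x y z assume a: "ev_eq x y" "ev_eq y z"
    show "ev_eq x z"
      by (rule ev_eq_by[OF finite_UnI[OF ev_eqD[OF a(1)] ev_eqD[OF a(2)]]])
         (auto intro: cong_trans)
  qed
qed

quotient_type qr = "nat \<Rightarrow> int" / ev_eq
  by (rule equivp_ev_eq)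

instantiation qr :: ab_group_add
begin

lift_definition zero_qr :: qr is "\<lambda>p. 0" .

lift_definition plus_qr :: "qr \<Rightarrow> qr \<Rightarrow> qr" is "\<lambda>x y p. x p + y p"
proof -
  fix x x' y y' :: "nat \<Rightarrow> int" assume a: "ev_eq x x'" "ev_eq y y'"
  show "ev_eq (\<lambda>p. x p + y p) (\<lambda>p. x' p + y' p)"
    by (rule ev_eq_by[OF finite_UnI[OF ev_eqD[OF a(1)] ev_eqD[OF a(2)]]])
       (auto intro: cong_add)
qed

lift_definition uminus_qr :: "qr \<Rightarrow> qr" is "\<lambda>x p. - x p"
proof -
  fix x x' :: "nat \<Rightarrow> int" assume a: "ev_eq x x'"
  show "ev_eq (\<lambda>p. - x p) (\<lambda>p. - x' p)"
    by (rule ev_eq_by[OF ev_eqD[OF a(1)]]) (auto intro: cong_minus_minus_iff[THEN iffD2])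
qed

lift_definition minus_qr :: "qr \<Rightarrow> qr \<Rightarrow> qr" is "\<lambda>x y p. x p - y p"
proof -
  fix x x' y y' :: "nat \<Rightarrow> int" assume a: "ev_eq x x'" "ev_eq y y'"
  show "ev_eq (\<lambda>p. x p - y p) (\<lambda>p. x' p - y' p)"
    by (rule ev_eq_by[OF finite_UnI[OF ev_eqD[OF a(1)] ev_eqD[OF a(2)]]])
       (auto intro: cong_diff)
qed

instance
  by standard (transfer; simp add: algebra_simps)+

end

definition rho :: "rat \<Rightarrow> nat \<Rightarrow> int" where
  "rho r p = fst (quotient_of r) * snd (quotient_of r) ^ (p - 2)"

lift_definition scaleQ :: "rat \<Rightarrow> qr \<Rightarrow> qr" is "\<lambda>r x p. rho r p * x p"
proof -
  fix r and x x' :: "nat \<Rightarrow> int" assume a: "ev_eq x x'"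
  show "ev_eq (\<lambda>p. rho r p * x p) (\<lambda>p. rho r p * x' p)"
    by (rule ev_eq_by[OF ev_eqD[OF a(1)]]) (auto intro: cong_mult)
qed


lemma fin_dvd: "(b::int) \<noteq> 0 \<Longrightarrow> finite {p::nat. int p dvd b}"
proof -
  assume b: "b \<noteq> 0"
  have "{p::nat. int p dvd b} \<subseteq> {..nat \<bar>b\<bar>}"
  proof
    fix p assume "p \<in> {p::nat. int p dvd b}"
    then have "\<bar>int p\<bar> \<le> \<bar>b\<bar>" using b by (intro dvd_imp_le_int) auto
    then have "int p \<le> \<bar>b\<bar>" by simp
    then show "p \<in> {..nat \<bar>b\<bar>}" by simp
  qed
  then show ?thesis using finite_subset by blast
qed

lemma coprime_prime_int: "prime p \<Longrightarrow> \<not> int p dvd d \<Longrightarrow> coprime d (int p)"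
  by (metis coprime_commute prime_imp_coprime prime_nat_int_transfer)

lemma rho_den:
  assumes p: "prime p" and nd: "\<not> int p dvd snd (quotient_of r)"
  shows "[snd (quotient_of r) * rho r p = fst (quotient_of r)] (mod int p)"
proof -
  define n where "n = fst (quotient_of r)"
  define d where "d = snd (quotient_of r)"
  have q2: "p - 2 + 1 = p - 1" using prime_ge_2_nat[OF p] by arith
  have e: "d ^ (p - 1) = d ^ (p - 2) * d" unfolding q2[symmetric] by simp
  have "d * rho r p = n * d ^ (p - 1)" unfolding rho_def n_def[symmetric] d_def[symmetric] e
    by (simp add: algebra_simps)
  also have "[n * d ^ (p - 1) = n * 1] (mod int p)"
    by (rule cong_mult[OF cong_refl fermat_int[OF p]]) (use nd d_def in simp)
  finally show ?thesis by (simp add: n_def d_def)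
qed

lemma rho_rep:
  assumes r: "r = of_int a / of_int b" and b: "b \<noteq> 0" and p: "prime p"
    and nb: "\<not> int p dvd b" and nd: "\<not> int p dvd snd (quotient_of r)"
  shows "[b * rho r p = a] (mod int p)"
proof -
  obtain n d where q: "quotient_of r = (n, d)" by (cases "quotient_of r")
  have d: "d > 0" using quotient_of_denom_pos[OF q] .
  have "of_int a / of_int b = (of_int n / of_int d :: rat)" using r quotient_of_div[OF q] by simp
  then have "(of_int a * of_int d :: rat) = of_int n * of_int b" using b d by (simp add: frac_eq_eq)
  then have ad: "a * d = n * b" by (metis of_int_eq_iff of_int_mult)
  have dr: "[d * rho r p = n] (mod int p)" using rho_den[OF p nd] q by simp
  have "[d * (b * rho r p) = b * (d * rho r p)] (mod int p)" by (simp add: algebra_simps)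
  also have "[b * (d * rho r p) = b * n] (mod int p)" by (rule cong_mult[OF cong_refl dr])
  also have "b * n = d * a" using ad by (simp add: algebra_simps)
  finally have "[d * (b * rho r p) = d * a] (mod int p)" .
  then show ?thesis using cong_mult_lcancel[OF coprime_prime_int[OF p]] nd q by simp
qed

lemma rho_add: "ev_eq (\<lambda>p. rho (r + s) p * x p) (\<lambda>p. rho r p * x p + rho s p * x p)"
proof -
  obtain n1 d1 where q1: "quotient_of r = (n1, d1)" by (cases "quotient_of r")
  obtain n2 d2 where q2: "quotient_of s = (n2, d2)" by (cases "quotient_of s")
  have d1: "d1 > 0" using quotient_of_denom_pos[OF q1] .
  have d2: "d2 > 0" using quotient_of_denom_pos[OF q2] .
  define D where "D = snd (quotient_of (r + s))"
  have D: "D > 0" unfolding D_def by (rule quotient_of_denom_pos')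
  have rs: "r + s = of_int (n1 * d2 + n2 * d1) / of_int (d1 * d2)"
    using quotient_of_div[OF q1] quotient_of_div[OF q2] d1 d2 by (simp add: field_simps)
  show ?thesis
  proof (rule ev_eq_by[OF fin_dvd[of "d1 * d2 * D"]])
    show "d1 * d2 * D \<noteq> 0" using d1 d2 D by simp
    fix p :: nat assume p: "prime p" and np: "p \<notin> {p. int p dvd d1 * d2 * D}"
    have pp: "prime (int p)" using p by simp
    have nd12: "\<not> int p dvd d1 * d2" using np by auto
    have nd1: "\<not> int p dvd d1" using np by auto
    have nd2: "\<not> int p dvd d2" using np by auto
    have nD: "\<not> int p dvd D" using np by auto
    have a: "[d1 * d2 * rho (r + s) p = n1 * d2 + n2 * d1] (mod int p)"
      by (rule rho_rep[OF rs _ p nd12]) (use d1 d2 nD D_def in auto)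
    have b1: "[d1 * rho r p = n1] (mod int p)" using rho_den[OF p, of r] nd1 q1 by simp
    have b2: "[d2 * rho s p = n2] (mod int p)" using rho_den[OF p, of s] nd2 q2 by simp
    have "[d1 * d2 * (rho r p + rho s p) = d2 * (d1 * rho r p) + d1 * (d2 * rho s p)] (mod int p)"
      by (simp add: algebra_simps)
    also have "[d2 * (d1 * rho r p) + d1 * (d2 * rho s p) = d2 * n1 + d1 * n2] (mod int p)"
      by (intro cong_add cong_mult cong_refl b1 b2)
    finally have c: "[d1 * d2 * (rho r p + rho s p) = d1 * d2 * rho (r + s) p] (mod int p)"
      using a by (metis (no_types, lifting) cong_sym cong_trans mult.commute)
    then have "[rho (r + s) p = rho r p + rho s p] (mod int p)"
      using cong_mult_lcancel[OF coprime_prime_int[OF p nd12]] by (meson cong_sym)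
    then have "[rho (r + s) p * x p = (rho r p + rho s p) * x p] (mod int p)"
      by (rule cong_mult[OF _ cong_refl])
    then show "[rho (r + s) p * x p = rho r p * x p + rho s p * x p] (mod int p)"
      by (simp add: distrib_right)
  qed
qed

lemma rho_mult: "ev_eq (\<lambda>p. rho r p * (rho s p * x p)) (\<lambda>p. rho (r * s) p * x p)"
proof -
  obtain n1 d1 where q1: "quotient_of r = (n1, d1)" by (cases "quotient_of r")
  obtain n2 d2 where q2: "quotient_of s = (n2, d2)" by (cases "quotient_of s")
  have d1: "d1 > 0" using quotient_of_denom_pos[OF q1] .
  have d2: "d2 > 0" using quotient_of_denom_pos[OF q2] .
  define D where "D = snd (quotient_of (r * s))"
  have D: "D > 0" unfolding D_def by (rule quotient_of_denom_pos')
  have rs: "r * s = of_int (n1 * n2) / of_int (d1 * d2)"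
    using quotient_of_div[OF q1] quotient_of_div[OF q2] d1 d2 by (simp add: field_simps)
  show ?thesis
  proof (rule ev_eq_by[OF fin_dvd[of "d1 * d2 * D"]])
    show "d1 * d2 * D \<noteq> 0" using d1 d2 D by simp
    fix p :: nat assume p: "prime p" and np: "p \<notin> {p. int p dvd d1 * d2 * D}"
    have nd12: "\<not> int p dvd d1 * d2" using np by auto
    have nd1: "\<not> int p dvd d1" using np by auto
    have nd2: "\<not> int p dvd d2" using np by auto
    have nD: "\<not> int p dvd D" using np by auto
    have a: "[d1 * d2 * rho (r * s) p = n1 * n2] (mod int p)"
      by (rule rho_rep[OF rs _ p nd12]) (use d1 d2 nD D_def in auto)
    have b1: "[d1 * rho r p = n1] (mod int p)" using rho_den[OF p, of r] nd1 q1 by simp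
    have b2: "[d2 * rho s p = n2] (mod int p)" using rho_den[OF p, of s] nd2 q2 by simp
    have "[d1 * d2 * (rho r p * rho s p) = (d1 * rho r p) * (d2 * rho s p)] (mod int p)"
      by (simp add: algebra_simps)
    also have "[(d1 * rho r p) * (d2 * rho s p) = n1 * n2] (mod int p)"
      by (intro cong_mult b1 b2)
    finally have c: "[d1 * d2 * (rho r p * rho s p) = d1 * d2 * rho (r * s) p] (mod int p)"
      using a by (metis (no_types, lifting) cong_sym cong_trans)
    then have "[rho r p * rho s p = rho (r * s) p] (mod int p)"
      using cong_mult_lcancel[OF coprime_prime_int[OF p nd12]] by simp
    then have "[(rho r p * rho s p) * x p = rho (r * s) p * x p] (mod int p)"
      by (rule cong_mult[OF _ cong_refl])
    then show "[rho r p * (rho s p * x p) = rho (r * s) p * x p] (mod int p)"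
      by (simp add: mult.assoc)
  qed
qed

lemma rho_one: "rho 1 p = 1" by (simp add: rho_def)

interpretation qv: vector_space scaleQ
proof
  fix a b :: rat and x y :: qr
  show "scaleQ a (x + y) = scaleQ a x + scaleQ a y"
    by transfer (simp add: algebra_simps)
  show "scaleQ (a + b) x = scaleQ a x + scaleQ b x"
    by transfer (rule rho_add)
  show "scaleQ a (scaleQ b x) = scaleQ (a * b) x"
    by transfer (rule rho_mult)
  show "scaleQ 1 x = x"
    by transfer (simp add: rho_one)
qed

interpretation qvp: vector_space_pair scaleQ scaleQ ..


definition enumP :: "nat \<Rightarrow> nat" where "enumP = enumerate PP"

lemma enumP_prime: "prime (enumP n)"
  using enumerate_in_set[OF primes_infinite] by (simp add: enumP_def)

lemma inj_enumP: "inj enumP"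
  unfolding enumP_def by (rule inj_enumerate[OF primes_infinite])

definition Sk :: "nat \<Rightarrow> nat set" where
  "Sk k = range (\<lambda>m. enumP (prod_encode (k, m)))"

lemma Sk_prime: "p \<in> Sk k \<Longrightarrow> prime p"
  by (auto simp: Sk_def enumP_prime)

lemma Sk_disj: "p \<in> Sk k \<Longrightarrow> p \<in> Sk j \<Longrightarrow> k = j"
  using inj_enumP by (auto simp: Sk_def inj_eq)

lemma Sk_inf: "infinite (Sk k)"
proof -
  have "inj (\<lambda>m. enumP (prod_encode (k, m)))"
  proof (rule injI)
    fix a b assume "enumP (prod_encode (k, a)) = enumP (prod_encode (k, b))"
    then have "prod_encode (k, a) = prod_encode (k, b)" using inj_enumP by (simp add: inj_eq)
    then show "a = b" by simp
  qed
  then show ?thesis unfolding Sk_def by (rule range_inj_infinite)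
qed

definition ind :: "nat \<Rightarrow> nat \<Rightarrow> int" where
  "ind k p = (if p \<in> Sk k then 1 else 0)"

definition vv :: "nat \<Rightarrow> qr" where "vv k = abs_qr (ind k)"

lemma sum_abs:
  assumes "finite K"
  shows "(\<Sum>k\<in>K. scaleQ (u k) (vv k)) = abs_qr (\<lambda>p. \<Sum>k\<in>K. rho (u k) p * ind k p)"
  using assms
proof (induction K rule: finite_induct)
  case empty
  then show ?case by (simp add: zero_qr.abs_eq)
next
  case (insert k K)
  then show ?case by (simp add: vv_def scaleQ.abs_eq plus_qr.abs_eq)
qed

lemma exists_good:
  assumes "finite E"
  obtains p where "p \<in> Sk k" "p \<notin> E"
proof -
  have "infinite (Sk k - E)" using Sk_inf assms by (rule Diff_infinite_finite[rotated])
  then have "Sk k - E \<noteq> {}" by (rule infinite_imp_nonempty)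
  then obtain p where "p \<in> Sk k - E" by blast
  then show ?thesis using that by blast
qed

lemma indep_claim:
  assumes K: "finite K" and s: "(\<Sum>k\<in>K. scaleQ (u k) (vv k)) = 0" and j: "j \<in> K"
  shows "u j = 0"
proof (rule ccontr)
  assume uj: "u j \<noteq> 0"
  define F where "F = (\<lambda>p. \<Sum>k\<in>K. rho (u k) p * ind k p)"
  have "abs_qr F = abs_qr (\<lambda>p. 0)" using s sum_abs[OF K, of u] by (simp add: F_def zero_qr.abs_eq)
  then have "ev_eq F (\<lambda>p. 0)" by (simp add: qr.abs_eq_iff)
  then have fB: "finite {p. prime p \<and> \<not> [F p = 0] (mod int p)}" by (rule ev_eqD)
  obtain n d where q: "quotient_of (u j) = (n, d)" by (cases "quotient_of (u j)")
  have d: "d > 0" using quotient_of_denom_pos[OF q] .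
  have n: "n \<noteq> 0" using uj quotient_of_div[OF q] by auto
  define E where "E = {p. prime p \<and> \<not> [F p = 0] (mod int p)} \<union> {p. int p dvd n} \<union> {p. int p dvd d}"
  have fE: "finite E" unfolding E_def using fB fin_dvd[OF n] fin_dvd[of d] d by simp
  obtain p where p: "p \<in> Sk j" "p \<notin> E" using exists_good[OF fE] by blast
  have pp: "prime p" using Sk_prime[OF p(1)] .
  have indp: "ind k p = (if k = j then 1 else 0)" for k
    using p(1) Sk_disj by (auto simp: ind_def)
  have "F p = (\<Sum>k\<in>K. if k = j then rho (u k) p else 0)"
    unfolding F_def by (rule sum.cong) (auto simp: indp)
  also have "\<dots> = rho (u j) p" using K j by simp
  finally have Fp: "F p = rho (u j) p" .
  have "[F p = 0] (mod int p)" using p pp by (auto simp: E_def)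
  then have r0: "[rho (u j) p = 0] (mod int p)" using Fp by simp
  have nd: "\<not> int p dvd d" using p by (auto simp: E_def)
  have "[d * rho (u j) p = n] (mod int p)" using rho_den[OF pp, of "u j"] q nd by simp
  moreover have "[d * rho (u j) p = d * 0] (mod int p)" by (rule cong_mult[OF cong_refl r0])
  ultimately have "[n = 0] (mod int p)" by (metis cong_sym cong_trans mult_zero_right)
  then have "int p dvd n" by (simp add: cong_0_iff)
  then show False using p by (auto simp: E_def)
qed

lemma inj_vv: "inj vv"
proof (rule injI)
  fix k j assume e: "vv k = vv j"
  then have "ev_eq (ind k) (ind j)" by (simp add: vv_def qr.abs_eq_iff)
  then have fB: "finite {p. prime p \<and> \<not> [ind k p = ind j p] (mod int p)}" by (rule ev_eqD)
  obtain p where p: "p \<in> Sk k" "p \<notin> {p. prime p \<and> \<not> [ind k p = ind j p] (mod int p)}"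
    using exists_good[OF fB] by blast
  have pp: "prime p" using Sk_prime[OF p(1)] .
  show "k = j"
  proof (rule ccontr)
    assume "k \<noteq> j"
    then have "p \<notin> Sk j" using Sk_disj p(1) by blast
    then have "[1 = 0] (mod int p)" using p pp by (auto simp: ind_def)
    then show False using pp by (simp add: cong_0_iff)
  qed
qed

lemma indep_vv: "qv.independent (range vv)"
  unfolding qv.independent_explicit_module
proof (intro allI impI)
  fix t u v assume t: "finite t" "t \<subseteq> range vv" "(\<Sum>v\<in>t. scaleQ (u v) v) = 0" "v \<in> t"
  define K where "K = vv -` t"
  have fK: "finite K" unfolding K_def using t(1) inj_vv by (simp add: finite_vimageI)
  have tK: "t = vv ` K" unfolding K_def using t(2) by auto
  have "(\<Sum>k\<in>K. scaleQ (u (vv k)) (vv k)) = 0"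
    using t(3) unfolding tK by (simp add: sum.reindex[OF inj_on_subset[OF inj_vv]])
  moreover obtain k where "k \<in> K" "v = vv k" using t(4) tK by blast
  ultimately show "u v = 0" using indep_claim[OF fK, of "\<lambda>k. u (vv k)"] by simp
qed


lemma exists_L: "\<exists>L::qr \<Rightarrow> qr. (\<forall>x y. L (x + y) = L x + L y) \<and> inj L \<and> \<not> surj L"
proof -
  define BB where "BB = qv.extend_basis (range vv)"
  have iBB: "qv.independent BB" unfolding BB_def by (rule qv.independent_extend_basis[OF indep_vv])
  have sBB: "qv.span BB = UNIV" unfolding BB_def by (rule qv.span_extend_basis[OF indep_vv])
  have vBB: "range vv \<subseteq> BB" unfolding BB_def by (rule qv.extend_basis_superset[OF indep_vv])
  define g where "g b = (if b \<in> range vv then vv (Suc (inv_into UNIV vv b)) else b)" for b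
  define g' where "g' b = (if b \<in> range vv then vv (inv_into UNIV vv b - 1) else b)" for b
  define h where "h b = (if b = vv 0 then b else 0)" for b
  define L where "L = qvp.construct BB g"
  define M where "M = qvp.construct BB g'"
  define N where "N = qvp.construct BB h"
  have linL: "Vector_Spaces.linear scaleQ scaleQ L" unfolding L_def by (rule qvp.linear_construct[OF iBB])
  have linM: "Vector_Spaces.linear scaleQ scaleQ M" unfolding M_def by (rule qvp.linear_construct[OF iBB])
  have linN: "Vector_Spaces.linear scaleQ scaleQ N" unfolding N_def by (rule qvp.linear_construct[OF iBB])
  have Lb: "L b = g b" if "b \<in> BB" for b unfolding L_def by (rule qvp.construct_basis[OF iBB that])
  have Mb: "M b = g' b" if "b \<in> BB" for b unfolding M_def by (rule qvp.construct_basis[OF iBB that])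
  have Nb: "N b = h b" if "b \<in> BB" for b unfolding N_def by (rule qvp.construct_basis[OF iBB that])
  have gBB: "g b \<in> BB" if "b \<in> BB" for b using that vBB by (auto simp: g_def)
  have invv: "inv_into UNIV vv (vv k) = k" for k by (rule inv_into_f_f[OF inj_vv UNIV_I])
  have compML: "(M \<circ> L) x = id x" for x
  proof (rule qvp.linear_eq_on[of "M \<circ> L" id x BB])
    show "Vector_Spaces.linear scaleQ scaleQ (M \<circ> L)" by (rule Vector_Spaces.linear_compose[OF linL linM])
    show "Vector_Spaces.linear scaleQ scaleQ id" by (rule qv.linear_id)
    show "x \<in> qv.span BB" using sBB by simp
    fix b assume b: "b \<in> BB"
    show "(M \<circ> L) b = id b"
    proof (cases "b \<in> range vv")
      case True
      then obtain k where k: "b = vv k" by blast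
      show ?thesis using b gBB[OF b] by (simp add: Lb Mb g_def g'_def k invv)
    next
      case False
      then show ?thesis using b by (simp add: Lb Mb g_def g'_def)
    qed
  qed
  have injL: "inj L"
  proof (rule injI)
    fix x y assume "L x = L y"
    then have "(M \<circ> L) x = (M \<circ> L) y" by simp
    then show "x = y" using compML by simp
  qed
  have NL: "(N \<circ> L) x = (\<lambda>_. 0) x" for x
  proof (rule qvp.linear_eq_on[of "N \<circ> L" "\<lambda>_. 0" x BB])
    show "Vector_Spaces.linear scaleQ scaleQ (N \<circ> L)" by (rule Vector_Spaces.linear_compose[OF linL linN])
    show "Vector_Spaces.linear scaleQ scaleQ (\<lambda>_. 0)" by (rule qvp.linear_zero)
    show "x \<in> qv.span BB" using sBB by simp
    fix b assume b: "b \<in> BB"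
    show "(N \<circ> L) b = (\<lambda>_. 0) b"
    proof (cases "b \<in> range vv")
      case True
      then obtain k where k: "b = vv k" by blast
      have "vv (Suc k) \<noteq> vv 0" using inj_vv by (auto simp: inj_eq)
      then show ?thesis using b gBB[OF b] by (simp add: Lb Nb g_def h_def k invv)
    next
      case False
      then have "b \<noteq> vv 0" by auto
      then show ?thesis using b False by (simp add: Lb Nb g_def h_def)
    qed
  qed
  have v0: "vv 0 \<noteq> 0"
  proof
    assume "vv 0 = 0"
    then have "0 \<in> range vv" by (metis rangeI)
    then show False using qv.dependent_zero indep_vv by blast
  qed
  have "vv 0 \<notin> range L"
  proof
    assume "vv 0 \<in> range L"
    then obtain x where x: "vv 0 = L x" by blast
    have "vv 0 \<in> BB" using vBB by blast
    then have "N (vv 0) = vv 0" by (simp add: Nb h_def)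
    moreover have "N (L x) = 0" using NL[of x] by simp
    ultimately show False using x v0 by simp
  qed
  then have "\<not> surj L" by auto
  moreover have "\<forall>x y. L (x + y) = L x + L y" using qvp.linear_add[OF linL] by simp
  ultimately show ?thesis using injL by blast
qed


abbreviation "PG \<equiv> primeProd"
abbreviation "TS \<equiv> carrier primeSum"

lemma subgroup_TS: "subgroup TS PG"
proof -
  have "subgroup {x \<in> (\<Pi>\<^sub>E i\<in>PP. carrier (integer_mod_group i)). finite {i \<in> PP. x i \<noteq> \<one>\<^bsub>integer_mod_group i\<^esub>}}
          (product_group PP integer_mod_group)"
    by (rule subgroup_sum_group) simp
  then show ?thesis by (simp add: primeProd_def primeSum_def carrier_sum_group)
qed

lemma comm_PG: "comm_group PG"
proof (rule group.group_comm_groupI[OF group_primeProd])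
  fix x y assume "x \<in> carrier PG" "y \<in> carrier PG"
  show "x \<otimes>\<^bsub>PG\<^esub> y = y \<otimes>\<^bsub>PG\<^esub> x" by (simp add: mult_primeProd add.commute)
qed

lemma normal_TS: "TS \<lhd> PG"
  by (rule comm_group.subgroup_imp_normal[OF comm_PG subgroup_TS])


lemma inv_PG:
  assumes x: "x \<in> carrier PG"
  shows "inv\<^bsub>PG\<^esub> x = (\<lambda>i\<in>PP. (- x i) mod int i)"
proof -
  have x': "x \<in> (\<Pi>\<^sub>E i\<in>PP. carrier (integer_mod_group i))" using x by (simp add: carrier_primeProd carPP)
  have "inv\<^bsub>PG\<^esub> x = (\<lambda>i\<in>PP. inv\<^bsub>integer_mod_group i\<^esub> x i)"
    unfolding primeProd_def by (rule inv_product_group[OF x']) simp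
  also have "\<dots> = (\<lambda>i\<in>PP. (- x i) mod int i)"
  proof (rule restrict_ext)
    fix i assume "i \<in> PP"
    then have "x i \<in> carrier (integer_mod_group i)" using x' by (simp add: PiE_iff)
    then show "inv\<^bsub>integer_mod_group i\<^esub> x i = (- x i) mod int i" by simp
  qed
  finally show ?thesis .
qed

lemma cong_lemma: "((a + (-b) mod (m::int)) mod m = 0) \<longleftrightarrow> [a = b] (mod m)"
  by (simp add: mod_add_right_eq cong_iff_dvd_diff dvd_eq_mod_eq_0)

lemma set_helper: "{i. (Q i \<longrightarrow> P i) \<and> Q i} = {i. Q i \<and> P i}" by blast

lemma coset_eq:
  assumes x: "x \<in> carrier PG" and y: "y \<in> carrier PG"
  shows "(TS #>\<^bsub>PG\<^esub> x = TS #>\<^bsub>PG\<^esub> y) \<longleftrightarrow> ev_eq x y"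
proof -
  have grp: "group PG" by (rule group_primeProd)
  have "(TS #>\<^bsub>PG\<^esub> x = TS #>\<^bsub>PG\<^esub> y) \<longleftrightarrow> y \<in> TS #>\<^bsub>PG\<^esub> x"
    using group.repr_independenceD[OF grp subgroup_TS y] group.repr_independence[OF grp _ x subgroup_TS]
    by blast
  also have "\<dots> \<longleftrightarrow> y \<otimes>\<^bsub>PG\<^esub> inv\<^bsub>PG\<^esub> x \<in> TS"
    by (rule subgroup.rcos_module[OF subgroup_TS grp x y])
  also have "y \<otimes>\<^bsub>PG\<^esub> inv\<^bsub>PG\<^esub> x = (\<lambda>i\<in>PP. (y i + (- x i) mod int i) mod int i)"
    by (simp add: inv_PG[OF x] mult_primeProd) (rule restrict_ext, simp)
  also have "\<dots> \<in> TS \<longleftrightarrow> finite {i \<in> PP. (y i + (- x i) mod int i) mod int i \<noteq> 0}"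
    by (simp add: carrier_primeSum prime_gt_0_nat set_helper)
  also have "{i \<in> PP. (y i + (- x i) mod int i) mod int i \<noteq> 0} = {p. prime p \<and> \<not> [x p = y p] (mod int p)}"
    by (auto simp: cong_lemma cong_sym_eq)
  finally show ?thesis by (simp add: ev_eq_def)
qed

definition nrm :: "(nat \<Rightarrow> int) \<Rightarrow> (nat \<Rightarrow> int)" where
  "nrm y = (\<lambda>p\<in>PP. y p mod int p)"

lemma nrm_car: "nrm y \<in> carrier PG"
  by (simp add: nrm_def carrier_primeProd prime_gt_0_nat)

lemma ev_nrm: "ev_eq (nrm y) y"
  by (rule ev_eq_by[of "{}"]) (auto simp: nrm_def cong_def)

lemma nrm_id: "x \<in> carrier PG \<Longrightarrow> nrm x = x"
  unfolding nrm_def carrier_primeProd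
  by (rule extensionalityI[of _ PP]) (auto simp: PiE_iff)

definition toQ :: "(nat \<Rightarrow> int) set \<Rightarrow> qr" where
  "toQ C = abs_qr (SOME x. x \<in> C)"

definition fromQ :: "qr \<Rightarrow> (nat \<Rightarrow> int) set" where
  "fromQ q = TS #>\<^bsub>PG\<^esub> nrm (rep_qr q)"

lemma ev_sym: "ev_eq x y \<Longrightarrow> ev_eq y x"
  using equivp_symp[OF equivp_ev_eq] by blast

lemma ev_trans: "ev_eq x y \<Longrightarrow> ev_eq y z \<Longrightarrow> ev_eq x z"
  using equivp_transp[OF equivp_ev_eq] by blast

lemma toQ_coset:
  assumes x: "x \<in> carrier PG"
  shows "toQ (TS #>\<^bsub>PG\<^esub> x) = abs_qr x"
proof -
  have grp: "group PG" by (rule group_primeProd)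
  have "x \<in> TS #>\<^bsub>PG\<^esub> x" by (rule group.rcos_self[OF grp x subgroup_TS])
  then have yin: "(SOME y. y \<in> TS #>\<^bsub>PG\<^esub> x) \<in> TS #>\<^bsub>PG\<^esub> x" by (rule someI[of "\<lambda>y. y \<in> TS #>\<^bsub>PG\<^esub> x"])
  define y where "y = (SOME y. y \<in> TS #>\<^bsub>PG\<^esub> x)"
  have yin': "y \<in> TS #>\<^bsub>PG\<^esub> x" using yin y_def by simp
  have yc: "y \<in> carrier PG"
    using monoid.r_coset_subset_G[OF group.is_monoid[OF grp] subgroup.subset[OF subgroup_TS] x] yin' by blast
  have "TS #>\<^bsub>PG\<^esub> x = TS #>\<^bsub>PG\<^esub> y"
    by (rule group.repr_independence[OF grp yin' x subgroup_TS])
  then have "ev_eq x y" using coset_eq[OF x yc] by simp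
  then show ?thesis unfolding toQ_def y_def[symmetric] by (simp add: qr.abs_eq_iff ev_sym)
qed

lemma fromQ_abs: "fromQ (abs_qr x) = TS #>\<^bsub>PG\<^esub> nrm x"
proof -
  have r: "ev_eq (rep_qr (abs_qr x)) x" by (rule Quotient3_rep_abs[OF Quotient3_qr ev_eq_refl])
  have "ev_eq (nrm (rep_qr (abs_qr x))) (nrm x)"
    by (rule ev_trans[OF ev_nrm ev_trans[OF r ev_sym[OF ev_nrm]]])
  then show ?thesis unfolding fromQ_def using coset_eq[OF nrm_car nrm_car] by simp
qed

lemma toQ_fromQ: "toQ (fromQ q) = q"
proof -
  have "toQ (fromQ q) = abs_qr (nrm (rep_qr q))" unfolding fromQ_def by (rule toQ_coset[OF nrm_car])
  also have "\<dots> = abs_qr (rep_qr q)" by (simp add: qr.abs_eq_iff ev_nrm)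
  also have "\<dots> = q" by (rule Quotient3_abs_rep[OF Quotient3_qr])
  finally show ?thesis .
qed

lemma carQ: "carrier (PG Mod TS) = (\<lambda>x. TS #>\<^bsub>PG\<^esub> x) ` carrier PG"
  by (simp add: carrier_FactGroup)

lemma fromQ_car: "fromQ q \<in> carrier (PG Mod TS)"
  unfolding carQ fromQ_def using nrm_car by blast

lemma fromQ_toQ: "C \<in> carrier (PG Mod TS) \<Longrightarrow> fromQ (toQ C) = C"
proof -
  assume "C \<in> carrier (PG Mod TS)"
  then obtain x where x: "x \<in> carrier PG" "C = TS #>\<^bsub>PG\<^esub> x" unfolding carQ by blast
  show ?thesis using x by (simp add: toQ_coset fromQ_abs nrm_id)
qed

lemma toQ_mult:
  assumes C: "C \<in> carrier (PG Mod TS)" and D: "D \<in> carrier (PG Mod TS)"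
  shows "toQ (C \<otimes>\<^bsub>PG Mod TS\<^esub> D) = toQ C + toQ D"
proof -
  obtain x where x: "x \<in> carrier PG" "C = TS #>\<^bsub>PG\<^esub> x" using C unfolding carQ by blast
  obtain y where y: "y \<in> carrier PG" "D = TS #>\<^bsub>PG\<^esub> y" using D unfolding carQ by blast
  have xy: "x \<otimes>\<^bsub>PG\<^esub> y \<in> carrier PG" using x y by (simp add: group.is_monoid[OF group_primeProd] monoid.m_closed)
  have "C \<otimes>\<^bsub>PG Mod TS\<^esub> D = TS #>\<^bsub>PG\<^esub> (x \<otimes>\<^bsub>PG\<^esub> y)"
    using x y by (simp add: normal.rcos_sum[OF normal_TS])
  then have "toQ (C \<otimes>\<^bsub>PG Mod TS\<^esub> D) = abs_qr (x \<otimes>\<^bsub>PG\<^esub> y)" using toQ_coset[OF xy] by simp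
  also have "\<dots> = abs_qr (\<lambda>p. x p + y p)"
    by (simp add: qr.abs_eq_iff, rule ev_eq_by[of "{}"]) (auto simp: mult_primeProd cong_def)
  also have "\<dots> = abs_qr x + abs_qr y" by (simp add: plus_qr.abs_eq)
  finally show ?thesis using x y by (simp add: toQ_coset)
qed

lemma group_Mod: "group (PG Mod TS)" by (rule normal.factorgroup_is_group[OF normal_TS])

lemma fromQ_add: "fromQ (a + b) = fromQ a \<otimes>\<^bsub>PG Mod TS\<^esub> fromQ b"
proof -
  have cl: "fromQ a \<otimes>\<^bsub>PG Mod TS\<^esub> fromQ b \<in> carrier (PG Mod TS)"
    by (rule monoid.m_closed[OF group.is_monoid[OF group_Mod] fromQ_car fromQ_car])
  have "toQ (fromQ a \<otimes>\<^bsub>PG Mod TS\<^esub> fromQ b) = a + b"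
    by (simp only: toQ_mult[OF fromQ_car fromQ_car] toQ_fromQ)
  then have "fromQ (a + b) = fromQ (toQ (fromQ a \<otimes>\<^bsub>PG Mod TS\<^esub> fromQ b))" by simp
  also have "\<dots> = fromQ a \<otimes>\<^bsub>PG Mod TS\<^esub> fromQ b" by (rule fromQ_toQ[OF cl])
  finally show ?thesis .
qed

lemma notCoHopf: "\<not> strongly_coHopfian (PG Mod TS)"
proof
  assume sc: "strongly_coHopfian (PG Mod TS)"
  obtain L :: "qr \<Rightarrow> qr" where Ladd: "\<And>x y. L (x + y) = L x + L y" and injL: "inj L" and nsL: "\<not> surj L"
    using exists_L by blast
  define f where "f C = fromQ (L (toQ C))" for C
  have hom: "f \<in> hom (PG Mod TS) (PG Mod TS)"
  proof (rule homI)
    fix C assume "C \<in> carrier (PG Mod TS)"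
    show "f C \<in> carrier (PG Mod TS)" by (simp add: f_def fromQ_car)
  next
    fix C D assume C: "C \<in> carrier (PG Mod TS)" and D: "D \<in> carrier (PG Mod TS)"
    show "f (C \<otimes>\<^bsub>PG Mod TS\<^esub> D) = f C \<otimes>\<^bsub>PG Mod TS\<^esub> f D"
      by (simp only: f_def toQ_mult[OF C D] Ladd fromQ_add)
  qed
  have iter: "(f ^^ n) C = fromQ ((L ^^ n) (toQ C))" if C: "C \<in> carrier (PG Mod TS)" for n C
  proof (induction n)
    case 0
    then show ?case using fromQ_toQ[OF C] by simp
  next
    case (Suc n)
    then show ?case by (simp add: f_def toQ_fromQ)
  qed
  have img: "(f ^^ n) ` carrier (PG Mod TS) = fromQ ` range (L ^^ n)" for n
  proof
    show "(f ^^ n) ` carrier (PG Mod TS) \<subseteq> fromQ ` range (L ^^ n)" using iter by auto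
    show "fromQ ` range (L ^^ n) \<subseteq> (f ^^ n) ` carrier (PG Mod TS)"
    proof
      fix C assume "C \<in> fromQ ` range (L ^^ n)"
      then obtain q where q: "C = fromQ ((L ^^ n) q)" by blast
      have "C = (f ^^ n) (fromQ q)" using iter[OF fromQ_car] q by (simp add: toQ_fromQ)
      then show "C \<in> (f ^^ n) ` carrier (PG Mod TS)" using fromQ_car by blast
    qed
  qed
  obtain n where n: "(f ^^ n) ` carrier (PG Mod TS) = (f ^^ Suc n) ` carrier (PG Mod TS)"
    using sc hom unfolding strongly_coHopfian_def by blast
  have injF: "inj fromQ" by (metis injI toQ_fromQ)
  have "range (L ^^ n) = range (L ^^ Suc n)"
    using n unfolding img by (simp add: inj_image_eq_iff[OF injF])
  also have "range (L ^^ Suc n) = (L ^^ n) ` range L" by (simp only: funpow_Suc_right image_comp)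
  finally have "(L ^^ n) ` UNIV = (L ^^ n) ` range L" .
  then have "UNIV = range L" using inj_image_eq_iff[OF inj_fn[OF injL]] by blast
  then show False using nsL by simp
qed


theorem mainTheorem14:
  shows "strongly_coHopfian primeProd \<and> strongly_coHopfian primeSum
         \<and> \<not> strongly_coHopfian (primeProd Mod (carrier primeSum))"
  using coHopf_prod coHopf_sum notCoHopf by blast

end
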